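(* Let $(G_n)$ be a sequence of finite graphs with $v_n:=|V(G_n)|$. Let $W_n\subset V(G_n)$ satisfy $\lim_n |W_n|/v_n=0$. For $R>0$ and $t>0$ let $$s_n(R,t):=\bigl|\{x\in V(G_n): |V_R(x)|>t\}\bigr| \quad\text{and}\quad w_n(R):=\bigl|\{x\in V(G_n): V_R(x)\cap W_n\neq\emptyset\}\bigr|,$$ where $V_R(x)$ is the vertex set of the ball of radius $R$ about $x$ in $G_n$ (graph distance). If for each $R>0$ we have $\lim_{t\to\infty}\limsup_{n\to\infty}s_n(R,t)/v_n=0$, then for each $R>0$ we have $\lim_{n\to\infty}w_n(R)/v_n=0$. *)

theory Defs
  imports Complex_Main "HOL-Library.Extended_Real" "HOL-Library.Liminf_Limsup"
begin

definition fin_graph :: "'a set \<Rightarrow> ('a \<Rightarrow> 'a \<Rightarrow> bool) \<Rightarrow> bool" where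
  "fin_graph V E \<longleftrightarrow> finite V \<and> (\<forall>x y. E x y \<longrightarrow> x \<in> V \<and> y \<in> V) \<and> (\<forall>x y. E x y \<longrightarrow> E y x)"

definition gball :: "'a set \<Rightarrow> ('a \<Rightarrow> 'a \<Rightarrow> bool) \<Rightarrow> real \<Rightarrow> 'a \<Rightarrow> 'a set" where
  "gball V E R x = {y \<in> V. \<exists>k::nat. real k \<le> R \<and> (E ^^ k) x y}"

end

theory Submission
  imports Defs
begin

lemma relpow_sym:
  assumes "\<And>x y. E x y \<Longrightarrow> E y x"
  shows "(E ^^ k) x y \<Longrightarrow> (E ^^ k) y x"
proof (induction k arbitrary: x y)
  case 0 then show ?case by simp
next
  case (Suc k)
  then obtain z where z: "(E ^^ k) x z" "E z y" by auto
  have "E y z" using assms z(2) .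
  moreover have "(E ^^ k) z x" using Suc.IH[OF z(1)] .
  ultimately show ?case by (rule relpowp_Suc_I2)
qed

lemma gball_sym:
  assumes "fin_graph V E" "y \<in> gball V E R x" "x \<in> V"
  shows "x \<in> gball V E R y"
  using assms relpow_sym[of E] unfolding gball_def fin_graph_def by blast

lemma gball_sub:
  assumes "fin_graph V E" "x \<in> gball V E R y"
  shows "gball V E R x \<subseteq> gball V E (2*R) y"
proof
  fix z assume "z \<in> gball V E R x"
  then obtain a where a: "z \<in> V" "real a \<le> R" "(E ^^ a) x z" unfolding gball_def by auto
  from assms(2) obtain b where b: "real b \<le> R" "(E ^^ b) y x" unfolding gball_def by auto
  have "(E ^^ (b + a)) y z" using a b relpowp_add[where P=E and m=b and n=a] by auto
  moreover have "real (b + a) \<le> 2 * R" using a b by simp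
  ultimately show "z \<in> gball V E (2*R) y" using a unfolding gball_def by blast
qed

lemma gball_finite: "fin_graph V E \<Longrightarrow> finite (gball V E R x)"
  unfolding fin_graph_def gball_def by auto

lemma count_bound:
  assumes G: "fin_graph V E" and WV: "W \<subseteq> V" and t: "t \<ge> 0"
  shows "real (card {x \<in> V. gball V E R x \<inter> W \<noteq> {}})
     \<le> real (card {x \<in> V. real (card (gball V E (2*R) x)) > t}) + t * real (card W)"
proof -
  let ?S = "{x \<in> V. real (card (gball V E (2*R) x)) > t}"
  let ?WW = "{w \<in> W. real (card (gball V E R w)) \<le> t}"
  let ?B = "\<Union>w\<in>?WW. gball V E R w"
  have finV: "finite V" using G unfolding fin_graph_def by auto
  have finW: "finite W" using finV WV finite_subset by blast
  have sub: "{x \<in> V. gball V E R x \<inter> W \<noteq> {}} \<subseteq> ?S \<union> ?B"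
  proof
    fix x assume x: "x \<in> {x \<in> V. gball V E R x \<inter> W \<noteq> {}}"
    show "x \<in> ?S \<union> ?B"
    proof (cases "x \<in> ?S")
      case False
      have le: "real (card (gball V E (2*R) x)) \<le> t" using x False by (simp add: not_less)
      from x obtain w where w: "w \<in> gball V E R x" "w \<in> W" by auto
      have "gball V E R w \<subseteq> gball V E (2*R) x" using gball_sub[OF G w(1)] .
      then have "card (gball V E R w) \<le> card (gball V E (2*R) x)"
        by (rule card_mono[OF gball_finite[OF G]])
      then have "w \<in> ?WW" using le w by auto
      moreover have "x \<in> gball V E R w" using gball_sym[OF G w(1)] x by auto
      ultimately show ?thesis by blast
    qed auto
  qed
  have "card {x \<in> V. gball V E R x \<inter> W \<noteq> {}} \<le> card (?S \<union> ?B)"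
    proof (rule card_mono[OF _ sub])
    have "finite ?B" by (rule finite_UN_I) (use finW gball_finite[OF G] in simp_all)
    moreover have "finite ?S" using finV by simp
    ultimately show "finite (?S \<union> ?B)" by blast
  qed
  also have "\<dots> \<le> card ?S + card ?B" by (rule card_Un_le)
  finally have 1: "real (card {x \<in> V. gball V E R x \<inter> W \<noteq> {}}) \<le> real (card ?S) + real (card ?B)"
    by linarith
  have "card ?B \<le> (\<Sum>w\<in>?WW. card (gball V E R w))" by (rule card_UN_le) (use finW in simp)
  then have "real (card ?B) \<le> (\<Sum>w\<in>?WW. real (card (gball V E R w)))"
    by (simp only: of_nat_sum[symmetric] of_nat_le_iff)
  also have "\<dots> \<le> (\<Sum>w\<in>?WW. t)" by (rule sum_mono) auto
  also have "\<dots> = t * real (card ?WW)" by simp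
  also have "\<dots> \<le> t * real (card W)"
  proof -
    have "card ?WW \<le> card W" by (rule card_mono[OF finW]) auto
    then show ?thesis using t by (intro mult_left_mono) auto
  qed
  finally show ?thesis using 1 by linarith
qed

theorem lemma3p12:
  fixes V :: "nat \<Rightarrow> 'a set" and E :: "nat \<Rightarrow> 'a \<Rightarrow> 'a \<Rightarrow> bool" and W :: "nat \<Rightarrow> 'a set"
  assumes graphs: "\<And>n. fin_graph (V n) (E n)"
    and W_sub: "\<And>n. W n \<subseteq> V n"
    and W_small: "(\<lambda>n. real (card (W n)) / real (card (V n))) \<longlonglongrightarrow> 0"
    and s_small: "\<And>R. R > 0 \<Longrightarrow>
        ((\<lambda>t. limsup (\<lambda>n. ereal (real (card {x \<in> V n. real (card (gball (V n) (E n) R x)) > t})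
                                     / real (card (V n))))) \<longlongrightarrow> 0) at_top"
    and R_pos: "R > 0"
  shows "(\<lambda>n. real (card {x \<in> V n. gball (V n) (E n) R x \<inter> W n \<noteq> {}}) / real (card (V n))) \<longlonglongrightarrow> 0"
proof (rule order_tendstoI)
  fix a :: real assume "a < 0"
  then show "\<forall>\<^sub>F n in sequentially. a < real (card {x \<in> V n. gball (V n) (E n) R x \<inter> W n \<noteq> {}}) / real (card (V n))"
    by (intro always_eventually allI) (rule less_le_trans[OF \<open>a < 0\<close>], simp)
next
  fix e :: real assume e: "e > 0"
  have "((\<lambda>t. limsup (\<lambda>n. ereal (real (card {x \<in> V n. real (card (gball (V n) (E n) (2*R) x)) > t})
                                     / real (card (V n))))) \<longlongrightarrow> 0) at_top"
    using s_small R_pos by simp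
  from order_tendstoD(2)[OF this, of "ereal (e/2)"] e
  obtain N where N: "\<And>t. t \<ge> N \<Longrightarrow> limsup (\<lambda>n. ereal (real (card {x \<in> V n. real (card (gball (V n) (E n) (2*R) x)) > t})
                                     / real (card (V n)))) < ereal (e/2)"
    by (auto simp: eventually_at_top_linorder)
  define t where "t = max N 0"
  have t0: "t \<ge> 0" by (simp add: t_def)
  have ev1: "\<forall>\<^sub>F n in sequentially. ereal (real (card {x \<in> V n. real (card (gball (V n) (E n) (2*R) x)) > t})
                                     / real (card (V n))) < ereal (e/2)"
    by (rule Limsup_lessD) (rule N, simp add: t_def)
  have "(\<lambda>n. t * (real (card (W n)) / real (card (V n)))) \<longlonglongrightarrow> t * 0"
    by (intro tendsto_mult_left W_small)
  then have ev2: "\<forall>\<^sub>F n in sequentially. t * (real (card (W n)) / real (card (V n))) < e/2"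
    using e by (intro order_tendstoD(2)) auto
  show "\<forall>\<^sub>F n in sequentially. real (card {x \<in> V n. gball (V n) (E n) R x \<inter> W n \<noteq> {}}) / real (card (V n)) < e"
    using ev1 ev2
  proof eventually_elim
    case (elim n)
    have cb: "real (card {x \<in> V n. gball (V n) (E n) R x \<inter> W n \<noteq> {}})
     \<le> real (card {x \<in> V n. real (card (gball (V n) (E n) (2*R) x)) > t}) + t * real (card (W n))"
      by (rule count_bound[OF graphs W_sub t0])
    have "real (card {x \<in> V n. gball (V n) (E n) R x \<inter> W n \<noteq> {}}) / real (card (V n))
      \<le> (real (card {x \<in> V n. real (card (gball (V n) (E n) (2*R) x)) > t}) + t * real (card (W n))) / real (card (V n))"
      by (rule divide_right_mono[OF cb]) simp
    also have "\<dots> = real (card {x \<in> V n. real (card (gball (V n) (E n) (2*R) x)) > t}) / real (card (V n))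
        + t * (real (card (W n)) / real (card (V n)))"
      by (simp add: add_divide_distrib)
    also have "\<dots> < e"
    proof -
      have h1: "real (card {x \<in> V n. real (card (gball (V n) (E n) (2*R) x)) > t}) / real (card (V n)) < e/2"
        using less_ereal.simps(1)[THEN iffD1, OF elim(1)] .
      show ?thesis using h1 elim(2) by linarith
    qed
    finally show ?case .
  qed
qed

end
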